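(* Let $A\subseteq B\subseteq C$ be convex sets in $\mathbb{R}^d$. Then: (i) $\operatorname{rdist}(A,B)=\inf\{\lambda\geq 0: B\subseteq(1+\lambda)A-\lambda A\}$; (ii) for any affine map $\pi:\mathbb{R}^d\to\mathbb{R}^m$, $\operatorname{rdist}(\pi(A),\pi(B))\leq\operatorname{rdist}(A,B)$, with equality if $m=d$ and $\pi$ is invertible; (iii) $\operatorname{rdist}(A,C)\leq\operatorname{rdist}(A,B)+\operatorname{rdist}(B,C)+2\operatorname{rdist}(A,B)\operatorname{rdist}(B,C)$; (iv) for convex sets $A_1,\dots,A_t,B_1,\dots,B_t\subseteq\mathbb{R}^d$ with $A_i\subseteq B_i$ for all $i\in[t]$, $\operatorname{rdist}\big(\operatorname{conv}(\bigcup_{i\in[t]}A_i),\operatorname{conv}(\bigcup_{i\in[t]}B_i)\big)\leq\max_{i\in[t]}\operatorname{rdist}(A_i,B_i)$.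
   Context: For nonempty convex sets $A\subseteq B\subseteq\mathbb{R}^d$, $\operatorname{rdist}(A,B)=\sup_{\pi}\frac{\sup_{b\in B}\inf_{a\in A}|\pi(b)-\pi(a)|}{\sup_{a,a'\in A}|\pi(a)-\pi(a')|}$, the supremum over all linear maps $\pi:\mathbb{R}^d\to\mathbb{R}$, where a fraction with denominator $\infty$ and the fraction $0/0$ are interpreted as $0$; moreover $\operatorname{rdist}(\emptyset,\emptyset)=0$ and $\operatorname{rdist}(\emptyset,B)=\infty$ for $B\neq\emptyset$. For sets $X,Y$ and scalars $\alpha,\beta$, $\alpha X-\beta Y=\{\alpha x-\beta y: x\in X, y\in Y\}$. *)

theory Defs
  imports "HOL-Analysis.Analysis" "HOL-Library.Extended_Real"
begin

definition rfrac :: "ereal \<Rightarrow> ereal \<Rightarrow> ereal" where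
  "rfrac N D = (if D = \<infinity> then 0 else if D = 0 then (if N = 0 then 0 else \<infinity>) else N / D)"

definition rdist :: "'a::euclidean_space set \<Rightarrow> 'a set \<Rightarrow> ereal" where
  "rdist A B =
     (if A = {} then (if B = {} then 0 else \<infinity>)
      else (SUP \<pi>\<in>{\<pi>::'a \<Rightarrow> real. linear \<pi>}.
              rfrac (SUP b\<in>B. INF a\<in>A. ereal \<bar>\<pi> b - \<pi> a\<bar>)
                    (SUP p\<in>A \<times> A. ereal \<bar>\<pi> (fst p) - \<pi> (snd p)\<bar>)))"

definition scaled_diff :: "real \<Rightarrow> 'a::real_vector set \<Rightarrow> real \<Rightarrow> 'a set \<Rightarrow> 'a set" where
  "scaled_diff \<alpha> X \<beta> Y = {\<alpha> *\<^sub>R x - \<beta> *\<^sub>R y | x y. x \<in> X \<and> y \<in> Y}"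

definition affine_map :: "('a::real_vector \<Rightarrow> 'b::real_vector) \<Rightarrow> bool" where
  "affine_map \<pi> \<longleftrightarrow> (\<exists>f c. linear f \<and> \<pi> = (\<lambda>x. f x + c))"

end

theory Submission
  imports Defs
begin

lemma sd_mem: "z \<in> scaled_diff a X b Y \<longleftrightarrow> (\<exists>x\<in>X. \<exists>y\<in>Y. z = a *\<^sub>R x - b *\<^sub>R y)"
  unfolding scaled_diff_def by blast

lemma R1:
  fixes N D :: ereal
  assumes "N \<ge> 0" "D \<ge> 0" "N \<le> ereal l * D" "l \<ge> 0"
  shows "rfrac N D \<le> ereal l"
proof -
  consider "D = \<infinity>" | "D = 0" | d where "D = ereal d" "d > 0"
    using assms(2) by (cases D) (auto simp: zero_ereal_def less_le)
  then show ?thesis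
  proof cases
    case 1 then show ?thesis using assms by (simp add: rfrac_def)
  next
    case 2 then show ?thesis using assms by (simp add: rfrac_def)
  next
    case 3
    then show ?thesis using assms
      by (cases N) (auto simp: rfrac_def field_simps)
  qed
qed

lemma R2:
  fixes N D :: ereal
  assumes "D \<noteq> \<infinity>" "D \<ge> 0" "l \<ge> 0" "ereal l * D < N"
  shows "ereal l \<le> rfrac N D"
proof -
  consider "D = 0" | d where "D = ereal d" "d > 0"
    using assms(1,2) by (cases D) (auto simp: zero_ereal_def less_le)
  then show ?thesis
  proof cases
    case 1 then show ?thesis using assms by (auto simp: rfrac_def)
  next
    case 2
    then show ?thesis using assms
      by (cases N) (auto simp: rfrac_def field_simps)
  qed
qed

lemma rdist_nonneg: "rdist A B \<ge> 0"
proof (cases "A = {}")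
  case False
  have lin: "linear (\<lambda>x::'a. 0::real)" by (simp add: linear_zero)
  have D0: "(SUP p\<in>A \<times> A. ereal \<bar>(\<lambda>x::'a. 0::real) (fst p) - (\<lambda>x. 0) (snd p)\<bar>) = 0"
    using False by simp
  have "0 \<le> rfrac (SUP b\<in>B. INF a\<in>A. ereal \<bar>(\<lambda>x::'a. 0::real) b - (\<lambda>x. 0) a\<bar>)
                    (SUP p\<in>A \<times> A. ereal \<bar>(\<lambda>x::'a. 0::real) (fst p) - (\<lambda>x. 0) (snd p)\<bar>)"
    unfolding D0 by (simp add: rfrac_def)
  also have "\<dots> \<le> (SUP \<pi>\<in>{\<pi>::'a \<Rightarrow> real. linear \<pi>}.
              rfrac (SUP b\<in>B. INF a\<in>A. ereal \<bar>\<pi> b - \<pi> a\<bar>)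
                    (SUP p\<in>A \<times> A. ereal \<bar>\<pi> (fst p) - \<pi> (snd p)\<bar>))"
    by (rule SUP_upper) (use lin in auto)
  finally show ?thesis using False by (simp add: rdist_def)
qed (simp add: rdist_def)


lemma L1:
  fixes A B :: "'a::euclidean_space set"
  assumes "A \<subseteq> B" "l \<ge> 0" "B \<subseteq> scaled_diff (1 + l) A l A"
  shows "rdist A B \<le> ereal l"
proof (cases "A = {}")
  case True
  then have "B = {}" using assms(3) by (auto simp: scaled_diff_def)
  then show ?thesis using True assms by (simp add: rdist_def)
next
  case False
  then have Bne: "B \<noteq> {}" using assms(1) by auto
  show ?thesis unfolding rdist_def using False
  proof (simp, intro SUP_least, clarsimp)
    fix \<pi> :: "'a \<Rightarrow> real" assume lin: "linear \<pi>"
    let ?D = "(SUP p\<in>A \<times> A. ereal \<bar>\<pi> (fst p) - \<pi> (snd p)\<bar>)"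
    let ?N = "(SUP b\<in>B. INF a\<in>A. ereal \<bar>\<pi> b - \<pi> a\<bar>)"
    have D0: "?D \<ge> 0"
    proof -
      obtain a where "a \<in> A" using False by auto
      then have "ereal \<bar>\<pi> (fst (a,a)) - \<pi> (snd (a,a))\<bar> \<le> ?D" by (intro SUP_upper) auto
      then show ?thesis by (simp add: zero_ereal_def)
    qed
    have N0: "?N \<ge> 0"
    proof -
      obtain b where "b \<in> B" using Bne by auto
      then have "(INF a\<in>A. ereal \<bar>\<pi> b - \<pi> a\<bar>) \<le> ?N" by (intro SUP_upper) auto
      moreover have "0 \<le> (INF a\<in>A. ereal \<bar>\<pi> b - \<pi> a\<bar>)" by (intro INF_greatest) auto
      ultimately show ?thesis by simp
    qed
    have "?N \<le> ereal l * ?D"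
    proof (intro SUP_least)
      fix b assume "b \<in> B"
      then obtain x y where xy: "x \<in> A" "y \<in> A" "b = (1 + l) *\<^sub>R x - l *\<^sub>R y"
        using assms(3) by (auto simp: scaled_diff_def)
      have "\<pi> b = (1 + l) * \<pi> x - l * \<pi> y"
        unfolding xy(3) using lin by (simp add: linear_diff linear_scale)
      then have "\<pi> b - \<pi> x = l * (\<pi> x - \<pi> y)" by (simp add: algebra_simps)
      then have "\<bar>\<pi> b - \<pi> x\<bar> = l * \<bar>\<pi> x - \<pi> y\<bar>" using assms(2) by (simp add: abs_mult)
      have "(INF a\<in>A. ereal \<bar>\<pi> b - \<pi> a\<bar>) \<le> ereal \<bar>\<pi> b - \<pi> x\<bar>"
        using xy by (intro INF_lower) auto
      also have "\<dots> = ereal l * ereal \<bar>\<pi> (fst (x,y)) - \<pi> (snd (x,y))\<bar>"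
        using \<open>\<bar>\<pi> b - \<pi> x\<bar> = _\<close> by simp
      also have "\<dots> \<le> ereal l * ?D"
        using xy assms(2) by (intro ereal_mult_left_mono SUP_upper) auto
      finally show "(INF a\<in>A. ereal \<bar>\<pi> b - \<pi> a\<bar>) \<le> ereal l * ?D" .
    qed
    then show "rfrac ?N ?D \<le> ereal l" using R1 N0 D0 assms(2) by blast
  qed
qed


lemma sd_convex:
  fixes A :: "'a::real_vector set"
  assumes "convex A"
  shows "convex (scaled_diff a A b A)"
proof -
  have "scaled_diff a A b A = (\<Union>x\<in>(\<lambda>x. a *\<^sub>R x) ` A. \<Union>y\<in>(\<lambda>x. (-b) *\<^sub>R x) ` A. {x + y})"
    (is "_ = ?R") by (auto simp: scaled_diff_def)
  moreover have "convex ?R" by (intro convex_sums convex_scaling assms)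
  ultimately show ?thesis by simp
qed

lemma term_le_rdist:
  assumes "A \<noteq> {}" "linear f"
  shows "rfrac (SUP b\<in>B. INF a\<in>A. ereal \<bar>f b - f a\<bar>)
                    (SUP p\<in>A \<times> A. ereal \<bar>f (fst p) - f (snd p)\<bar>) \<le> rdist A B"
  unfolding rdist_def using assms by (simp, intro SUP_upper) auto

lemma sep_part:
  fixes A B :: "'a::euclidean_space set"
  assumes "convex A" "A \<noteq> {}" "rdist A B < ereal l'" "l' > 0" "z \<in> B"
  shows "z \<in> closure (scaled_diff (1 + l') A l' A)"
proof (rule ccontr)
  define K where "K = scaled_diff (1 + l') A l' A"
  assume "z \<notin> closure (scaled_diff (1 + l') A l' A)"
  then have "z \<notin> closure K" by (simp add: K_def)
  then obtain a \<beta> where ab: "inner a z < \<beta>" "\<forall>x\<in>closure K. inner a x > \<beta>"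
    using separating_hyperplane_closed_point[OF convex_closure[OF sd_convex[OF assms(1)]] closed_closure]
    unfolding K_def by blast
  define f where "f = (\<lambda>x. inner a x)"
  have lin: "linear f" unfolding f_def by (simp add: linear_iff inner_add_right)
  have key: "(1 + l') * f x - l' * f y > \<beta>" if "x \<in> A" "y \<in> A" for x y
  proof -
    have "(1 + l') *\<^sub>R x - l' *\<^sub>R y \<in> K"
      using that unfolding K_def sd_mem by blast
    then have "(1 + l') *\<^sub>R x - l' *\<^sub>R y \<in> closure K"
      using closure_subset by blast
    then have "\<beta> < inner a ((1 + l') *\<^sub>R x - l' *\<^sub>R y)" using ab(2) by blast
    then show ?thesis unfolding f_def by (simp add: inner_diff_right)
  qed
  obtain a0 where a0: "a0 \<in> A" using assms(2) by auto
  have bddA: "bdd_above (f ` A)"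
  proof (rule bdd_aboveI2)
    fix y assume "y \<in> A"
    from key[OF a0 this] assms(4) show "f y \<le> ((1 + l') * f a0 - \<beta>) / l'"
      by (simp add: field_simps)
  qed
  have bddB: "bdd_below (f ` A)"
  proof (rule bdd_belowI2)
    fix x assume "x \<in> A"
    from key[OF this a0] assms(4) show "(\<beta> + l' * f a0) / (1 + l') \<le> f x"
      by (simp add: field_simps)
  qed
  define M where "M = Sup (f ` A)"
  define m where "m = Inf (f ` A)"
  have upM: "f x \<le> M" if "x \<in> A" for x
    unfolding M_def using bddA that by (intro cSup_upper) auto
  have lowm: "m \<le> f x" if "x \<in> A" for x
    unfolding m_def using bddB that by (intro cInf_lower) auto
  have hM: "\<beta> + l' * M \<le> (1 + l') * f x" if "x \<in> A" for x
  proof -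
    have "M \<le> ((1 + l') * f x - \<beta>) / l'"
      unfolding M_def
    proof (rule cSup_least)
      show "f ` A \<noteq> {}" using assms(2) by simp
      fix v assume "v \<in> f ` A"
      then obtain y where "y \<in> A" "v = f y" by auto
      with key[OF that this(1)] assms(4) show "v \<le> ((1 + l') * f x - \<beta>) / l'"
        by (simp add: field_simps)
    qed
    then show ?thesis using assms(4) by (simp add: field_simps)
  qed
  have hm: "\<beta> + l' * M \<le> (1 + l') * m"
  proof -
    have "(\<beta> + l' * M) / (1 + l') \<le> m"
      unfolding m_def
    proof (rule cInf_greatest)
      show "f ` A \<noteq> {}" using assms(2) by simp
      fix v assume "v \<in> f ` A"
      then obtain y where "y \<in> A" "v = f y" by auto
      with hM[OF this(1)] assms(4) show "(\<beta> + l' * M) / (1 + l') \<le> v"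
        by (simp add: field_simps)
    qed
    then show ?thesis using assms(4) by (simp add: field_simps)
  qed
  let ?D = "(SUP p\<in>A \<times> A. ereal \<bar>f (fst p) - f (snd p)\<bar>)"
  let ?N = "(SUP b\<in>B. INF a\<in>A. ereal \<bar>f b - f a\<bar>)"
  have Dle: "?D \<le> ereal (M - m)"
  proof (rule SUP_least)
    fix p assume "p \<in> A \<times> A"
    then have "fst p \<in> A" "snd p \<in> A" by auto
    then have "f (fst p) \<le> M" "f (snd p) \<le> M" "m \<le> f (fst p)" "m \<le> f (snd p)"
      using upM lowm by auto
    then have "\<bar>f (fst p) - f (snd p)\<bar> \<le> M - m" by linarith
    then show "ereal \<bar>f (fst p) - f (snd p)\<bar> \<le> ereal (M - m)" by simp
  qed
  have D0: "?D \<ge> 0"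
  proof -
    have "ereal \<bar>f (fst (a0,a0)) - f (snd (a0,a0))\<bar> \<le> ?D" using a0 by (intro SUP_upper) auto
    then show ?thesis by (simp add: zero_ereal_def)
  qed
  have Nge: "ereal (m - f z) \<le> ?N"
  proof -
    have "ereal (m - f z) \<le> (INF a\<in>A. ereal \<bar>f z - f a\<bar>)"
    proof (rule INF_greatest)
      fix x assume "x \<in> A"
      then show "ereal (m - f z) \<le> ereal \<bar>f z - f x\<bar>" using lowm[of x] by simp
    qed
    also have "\<dots> \<le> ?N" using assms(5) by (intro SUP_upper)
    finally show ?thesis .
  qed
  have fz: "f z < \<beta>" using ab(1) unfolding f_def .
  have "l' * (M - m) < m - f z" using hm fz by (simp add: algebra_simps)
  have "ereal l' * ?D \<le> ereal l' * ereal (M - m)"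
    using Dle assms(4) by (intro ereal_mult_left_mono) auto
  also have "\<dots> < ereal (m - f z)" using \<open>l' * (M - m) < m - f z\<close> by simp
  also have "\<dots> \<le> ?N" by (rule Nge)
  finally have "ereal l' * ?D < ?N" .
  then have "ereal l' \<le> rfrac ?N ?D"
    using Dle D0 assms(4) by (intro R2) auto
  also have "\<dots> \<le> rdist A B" by (rule term_le_rdist[OF assms(2) lin])
  finally show False using assms(3) by simp
qed


lemma close_part:
  fixes A :: "'a::euclidean_space set"
  assumes "convex A" "A \<noteq> {}" "0 \<le> l'" "l' < l" "z \<in> closure (scaled_diff (1 + l') A l' A)"
  shows "z \<in> scaled_diff (1 + l) A l A"
proof -
  obtain c where c: "c \<in> rel_interior A" using rel_interior_eq_empty[OF assms(1)] assms(2) by auto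
  then obtain e where e: "e > 0" "ball c e \<inter> affine hull A \<subseteq> A" "c \<in> A"
    by (auto simp: mem_rel_interior_ball)
  have sub: "scaled_diff (1 + l') A l' A \<subseteq> affine hull A"
  proof
    fix x assume "x \<in> scaled_diff (1 + l') A l' A"
    then obtain p q where pq: "p \<in> A" "q \<in> A" "x = (1 + l') *\<^sub>R p - l' *\<^sub>R q"
      by (auto simp: scaled_diff_def)
    have "(1 + l') *\<^sub>R p + (- l') *\<^sub>R q \<in> affine hull A"
      by (rule mem_affine[OF affine_affine_hull]) (use pq hull_inc in auto)
    then show "x \<in> affine hull A" using pq by simp
  qed
  have zh: "z \<in> affine hull A"
    using closure_minimal[OF sub closed_affine_hull] assms(5) by blast
  have lpos: "l - l' > 0" using assms by simp
  obtain k where k: "k \<in> scaled_diff (1 + l') A l' A" "dist z k < (l - l') * e"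
    using closure_approachableD[OF assms(5)] lpos e(1) by (metis mult_pos_pos)
  then obtain p q where pq: "p \<in> A" "q \<in> A" "k = (1 + l') *\<^sub>R p - l' *\<^sub>R q"
    by (auto simp: scaled_diff_def)
  define t where "t = 1 / (l - l')"
  define w where "w = c + t *\<^sub>R (z - k)"
  have "w \<in> affine hull A" unfolding w_def
  proof (rule mem_affine_3_minus[OF affine_affine_hull])
    show "c \<in> affine hull A" using e(3) by (rule hull_inc)
    show "z \<in> affine hull A" by (rule zh)
    show "k \<in> affine hull A" using k(1) sub by (rule subsetD[rotated])
  qed
  moreover have "w \<in> ball c e"
  proof -
    have "dist c w = t * norm (z - k)" unfolding w_def t_def using lpos by (simp add: dist_norm)
    also have "\<dots> < t * ((l - l') * e)"
      by (intro mult_strict_left_mono) (use k(2) lpos in \<open>auto simp: dist_norm t_def\<close>)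
    also have "\<dots> = e" unfolding t_def using lpos by simp
    finally show ?thesis by simp
  qed
  ultimately have w: "w \<in> A" using e(2) by blast
  have l0: "l > 0" using assms by simp
  have l1: "1 + l > 0" "1 + l \<noteq> 0" using l0 by auto
  define a where "a = ((1 + l') / (1 + l)) *\<^sub>R p + ((l - l') / (1 + l)) *\<^sub>R w"
  define a' where "a' = (l' / l) *\<^sub>R q + ((l - l') / l) *\<^sub>R c"
  have aA: "a \<in> A" unfolding a_def
    by (rule convexD[OF assms(1) pq(1) w]) (use assms l0 l1 in \<open>auto simp: divide_simps\<close>)
  have a'A: "a' \<in> A" unfolding a'_def
    by (rule convexD[OF assms(1) pq(2) e(3)]) (use assms l0 in \<open>auto simp: field_simps\<close>)
  have e1: "(1 + l) *\<^sub>R a = (1 + l') *\<^sub>R p + (l - l') *\<^sub>R w"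
    unfolding a_def using l0 by (simp add: scaleR_add_right)
  have e2: "l *\<^sub>R a' = l' *\<^sub>R q + (l - l') *\<^sub>R c"
    unfolding a'_def using l0 by (simp add: scaleR_add_right)
  have e3: "(l - l') *\<^sub>R w = (l - l') *\<^sub>R c + (z - k)"
    unfolding w_def t_def using lpos by (simp add: scaleR_add_right)
  have "z = (1 + l) *\<^sub>R a - l *\<^sub>R a'"
    unfolding e1 e2 e3 pq(3) by (simp add: algebra_simps)
  then show ?thesis using aA a'A unfolding sd_mem by blast
qed


lemma part_i:
  fixes A B :: "'a::euclidean_space set"
  assumes "convex A" "A \<subseteq> B"
  shows "rdist A B = Inf (ereal ` {l::real. l \<ge> 0 \<and> B \<subseteq> scaled_diff (1 + l) A l A})"
proof (rule antisym)
  show "rdist A B \<le> Inf (ereal ` {l::real. l \<ge> 0 \<and> B \<subseteq> scaled_diff (1 + l) A l A})"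
  proof (rule Inf_greatest)
    fix x assume "x \<in> ereal ` {l::real. l \<ge> 0 \<and> B \<subseteq> scaled_diff (1 + l) A l A}"
    then obtain l where "l \<ge> 0" "B \<subseteq> scaled_diff (1 + l) A l A" "x = ereal l" by auto
    then show "rdist A B \<le> x" using L1[OF assms(2)] by simp
  qed
  show "Inf (ereal ` {l::real. l \<ge> 0 \<and> B \<subseteq> scaled_diff (1 + l) A l A}) \<le> rdist A B"
  proof (cases "A = {}")
    case True
    show ?thesis
    proof (cases "B = {}")
      case True
      then have "ereal 0 \<in> ereal ` {l::real. l \<ge> 0 \<and> B \<subseteq> scaled_diff (1 + l) A l A}" by auto
      then have "Inf (ereal ` {l::real. l \<ge> 0 \<and> B \<subseteq> scaled_diff (1 + l) A l A}) \<le> ereal 0"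
        by (rule Inf_lower)
      then have "Inf (ereal ` {l::real. l \<ge> 0 \<and> B \<subseteq> scaled_diff (1 + l) A l A}) \<le> 0"
        by (simp add: zero_ereal_def)
      then show ?thesis using rdist_nonneg order_trans by blast
    next
      case False
      then show ?thesis using \<open>A = {}\<close> by (simp add: rdist_def)
    qed
  next
    case Ane: False
    show ?thesis
    proof (cases "rdist A B = \<infinity>")
      case True then show ?thesis by simp
    next
      case False
      then obtain r where r: "rdist A B = ereal r" "r \<ge> 0"
        using rdist_nonneg[of A B] by (cases "rdist A B") auto
      show ?thesis
      proof (rule ereal_le_epsilon2)
        fix e :: real assume e: "e > 0"
        have "B \<subseteq> scaled_diff (1 + (r + e)) A (r + e) A"
        proof
          fix z assume z: "z \<in> B"
          have "z \<in> closure (scaled_diff (1 + (r + e/2)) A (r + e/2) A)"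
            by (rule sep_part[OF assms(1) Ane _ _ z]) (use r e in auto)
          then show "z \<in> scaled_diff (1 + (r + e)) A (r + e) A"
            by (rule close_part[OF assms(1) Ane, rotated 2]) (use r e in auto)
        qed
        then have "ereal (r + e) \<in> ereal ` {l::real. l \<ge> 0 \<and> B \<subseteq> scaled_diff (1 + l) A l A}"
          using r e by auto
        then have "Inf (ereal ` {l::real. l \<ge> 0 \<and> B \<subseteq> scaled_diff (1 + l) A l A}) \<le> ereal (r + e)"
          by (rule Inf_lower)
        then show "Inf (ereal ` {l::real. l \<ge> 0 \<and> B \<subseteq> scaled_diff (1 + l) A l A}) \<le> rdist A B + ereal e"
          using r by simp
      qed
    qed
  qed
qed

lemma prod_image_SUP:
  fixes h :: "'b \<times> 'b \<Rightarrow> ereal"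
  shows "(SUP p\<in>g ` A \<times> g ` A. h p) = (SUP p\<in>A \<times> A. h (g (fst p), g (snd p)))"
proof -
  have "g ` A \<times> g ` A = (\<lambda>p. (g (fst p), g (snd p))) ` (A \<times> A)" by force
  then show ?thesis by (simp add: image_image)
qed

lemma part_ii_le:
  fixes \<pi> :: "'a::euclidean_space \<Rightarrow> 'b::euclidean_space"
  assumes "affine_map \<pi>"
  shows "rdist (\<pi> ` A) (\<pi> ` B) \<le> rdist A B"
proof -
  obtain f c where fc: "linear f" "\<pi> = (\<lambda>x. f x + c)" using assms by (auto simp: affine_map_def)
  show ?thesis
  proof (cases "A = {}")
    case True then show ?thesis by (simp add: rdist_def)
  next
    case False
    show ?thesis unfolding rdist_def[of "\<pi> ` A"] using False
    proof (simp, intro SUP_least, clarsimp)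
      fix \<phi> :: "'b \<Rightarrow> real" assume lin: "linear \<phi>"
      have eq: "\<phi> (\<pi> x) - \<phi> (\<pi> y) = (\<phi> \<circ> f) x - (\<phi> \<circ> f) y" for x y
        using lin fc by (simp add: linear_add)
      have "rfrac (SUP b\<in>\<pi> ` B. INF a\<in>\<pi> ` A. ereal \<bar>\<phi> b - \<phi> a\<bar>)
              (SUP p\<in>\<pi> ` A \<times> \<pi> ` A. ereal \<bar>\<phi> (fst p) - \<phi> (snd p)\<bar>)
          = rfrac (SUP b\<in>B. INF a\<in>A. ereal \<bar>(\<phi> \<circ> f) b - (\<phi> \<circ> f) a\<bar>)
              (SUP p\<in>A \<times> A. ereal \<bar>(\<phi> \<circ> f) (fst p) - (\<phi> \<circ> f) (snd p)\<bar>)"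
        unfolding prod_image_SUP by (simp add: image_image eq del: o_apply)
      also have "\<dots> \<le> rdist A B"
        by (rule term_le_rdist[OF False linear_compose[OF fc(1) lin]])
      finally show "rfrac (SUP b\<in>\<pi> ` B. INF a\<in>\<pi> ` A. ereal \<bar>\<phi> b - \<phi> a\<bar>)
              (SUP p\<in>\<pi> ` A \<times> \<pi> ` A. ereal \<bar>\<phi> (fst p) - \<phi> (snd p)\<bar>) \<le> rdist A B" .
    qed
  qed
qed

lemma part_ii_eq:
  fixes \<pi> :: "'a::euclidean_space \<Rightarrow> 'b::euclidean_space"
  assumes "affine_map \<pi>" "bij \<pi>"
  shows "rdist (\<pi> ` A) (\<pi> ` B) = rdist A B"
proof (rule antisym)
  show "rdist (\<pi> ` A) (\<pi> ` B) \<le> rdist A B" by (rule part_ii_le[OF assms(1)])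
  obtain f c where fc: "linear f" "\<pi> = (\<lambda>x. f x + c)" using assms by (auto simp: affine_map_def)
  have "inj f"
  proof (rule injI)
    fix x y assume "f x = f y"
    then have "\<pi> x = \<pi> y" using fc by simp
    then show "x = y" using assms(2) by (auto simp: bij_def inj_def)
  qed
  then obtain g where g: "linear g" "g \<circ> f = id" using linear_injective_left_inverse[OF fc(1)] by blast
  define \<rho> where "\<rho> = (\<lambda>y. g y + (- g c))"
  have aff: "affine_map \<rho>" unfolding affine_map_def \<rho>_def using g by blast
  have inv: "\<rho> (\<pi> x) = x" for x
    using g fc unfolding \<rho>_def by (simp add: linear_add pointfree_idE)
  have "\<rho> ` \<pi> ` A = A" "\<rho> ` \<pi> ` B = B" by (simp_all add: image_image inv)
  then show "rdist A B \<le> rdist (\<pi> ` A) (\<pi> ` B)" using part_ii_le[OF aff, of "\<pi> ` A" "\<pi> ` B"] by simp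
qed


lemma sd_up:
  fixes A :: "'a::real_vector set"
  assumes "convex A" "0 \<le> l" "l \<le> l2" "B \<subseteq> scaled_diff (1 + l) A l A"
  shows "B \<subseteq> scaled_diff (1 + l2) A l2 A"
proof
  fix z assume "z \<in> B"
  then obtain x y where xy: "x \<in> A" "y \<in> A" "z = (1 + l) *\<^sub>R x - l *\<^sub>R y"
    using assms(4) by (auto simp: scaled_diff_def)
  show "z \<in> scaled_diff (1 + l2) A l2 A"
  proof (cases "l2 = 0")
    case True
    then have "l = 0" using assms by simp
    then show ?thesis using xy True unfolding sd_mem by auto
  next
    case False
    then have l2: "l2 > 0" using assms by simp
    define y' where "y' = ((l2 - l) / l2) *\<^sub>R x + (l / l2) *\<^sub>R y"
    have "y' \<in> A" unfolding y'_def
      by (rule convexD[OF assms(1) xy(1,2)]) (use assms l2 in \<open>auto simp: divide_simps\<close>)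
    moreover have "l2 *\<^sub>R y' = (l2 - l) *\<^sub>R x + l *\<^sub>R y"
      unfolding y'_def using l2 by (simp add: scaleR_add_right)
    then have "z = (1 + l2) *\<^sub>R x - l2 *\<^sub>R y'"
      unfolding xy(3) by (simp add: algebra_simps)
    ultimately show ?thesis using xy unfolding sd_mem by blast
  qed
qed

lemma sd_mono: "X \<subseteq> Y \<Longrightarrow> scaled_diff a X b X \<subseteq> scaled_diff a Y b Y"
  unfolding scaled_diff_def by blast

lemma sd_comp:
  fixes A :: "'a::real_vector set"
  assumes "convex A" "0 \<le> l1" "0 \<le> l2" "B \<subseteq> scaled_diff (1 + l1) A l1 A"
    "C \<subseteq> scaled_diff (1 + l2) B l2 B"
  shows "C \<subseteq> scaled_diff (1 + (l1 + l2 + 2 * l1 * l2)) A (l1 + l2 + 2 * l1 * l2) A"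
proof
  define l where "l = l1 + l2 + 2 * l1 * l2"
  fix z assume "z \<in> C"
  then obtain b1 b2 where b: "b1 \<in> B" "b2 \<in> B" "z = (1 + l2) *\<^sub>R b1 - l2 *\<^sub>R b2"
    using assms(5) by (auto simp: scaled_diff_def)
  obtain a1 a1' where a1: "a1 \<in> A" "a1' \<in> A" "b1 = (1 + l1) *\<^sub>R a1 - l1 *\<^sub>R a1'"
    using assms(4) b(1) by (auto simp: scaled_diff_def)
  obtain a2 a2' where a2: "a2 \<in> A" "a2' \<in> A" "b2 = (1 + l1) *\<^sub>R a2 - l1 *\<^sub>R a2'"
    using assms(4) b(2) by (auto simp: scaled_diff_def)
  have zeq: "z = ((1 + l1) * (1 + l2)) *\<^sub>R a1 + (l1 * l2) *\<^sub>R a2'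
      - (((1 + l2) * l1) *\<^sub>R a1' + (l2 * (1 + l1)) *\<^sub>R a2)"
    unfolding b(3) a1(3) a2(3) by (simp add: algebra_simps)
  show "z \<in> scaled_diff (1 + l) A l A"
  proof (cases "l = 0")
    case True
    then have "l1 = 0" "l2 = 0" using assms(2,3) unfolding l_def
      by (smt (verit) mult_nonneg_nonneg)+
    then have "z = (1 + l) *\<^sub>R a1 - l *\<^sub>R a1" using zeq True by simp
    then show ?thesis using a1 unfolding sd_mem by blast
  next
    case False
    then have lp: "l > 0" using assms(2,3) unfolding l_def
      by (smt (verit) mult_nonneg_nonneg)
    define x where "x = (((1 + l1) * (1 + l2)) / (1 + l)) *\<^sub>R a1 + ((l1 * l2) / (1 + l)) *\<^sub>R a2'"
    define y where "y = (((1 + l2) * l1) / l) *\<^sub>R a1' + ((l2 * (1 + l1)) / l) *\<^sub>R a2"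
    have s1: "((1 + l1) * (1 + l2)) / (1 + l) + (l1 * l2) / (1 + l) = 1"
      using lp unfolding l_def by (simp add: divide_simps) (simp add: algebra_simps)
    have s2: "((1 + l2) * l1) / l + (l2 * (1 + l1)) / l = 1"
      using lp unfolding l_def by (simp add: divide_simps) (simp add: algebra_simps)
    have "x \<in> A" unfolding x_def
      by (rule convexD[OF assms(1) a1(1) a2(2)]) (use assms(2,3) lp s1 in auto)
    moreover have "y \<in> A" unfolding y_def
      by (rule convexD[OF assms(1) a1(2) a2(1)]) (use assms(2,3) lp s2 in auto)
    moreover have "(1 + l) *\<^sub>R x = ((1 + l1) * (1 + l2)) *\<^sub>R a1 + (l1 * l2) *\<^sub>R a2'"
      unfolding x_def using lp by (simp add: scaleR_add_right)
    moreover have "l *\<^sub>R y = ((1 + l2) * l1) *\<^sub>R a1' + (l2 * (1 + l1)) *\<^sub>R a2"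
      unfolding y_def using lp by (simp add: scaleR_add_right)
    ultimately show ?thesis using zeq unfolding sd_mem by metis
  qed
qed


lemma get_l:
  fixes A B :: "'a::euclidean_space set"
  assumes "convex A" "A \<subseteq> B" "rdist A B < ereal u"
  shows "\<exists>l. 0 \<le> l \<and> l < u \<and> B \<subseteq> scaled_diff (1 + l) A l A"
proof -
  have "Inf (ereal ` {l::real. l \<ge> 0 \<and> B \<subseteq> scaled_diff (1 + l) A l A}) < ereal u"
    using assms(3) unfolding part_i[OF assms(1,2)] .
  then obtain x where "x \<in> ereal ` {l::real. l \<ge> 0 \<and> B \<subseteq> scaled_diff (1 + l) A l A}" "x < ereal u"
    unfolding Inf_less_iff by blast
  then show ?thesis by auto
qed

lemma part_iii:
  fixes A B C :: "'a::euclidean_space set"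
  assumes "convex A" "convex B" "A \<subseteq> B" "B \<subseteq> C"
  shows "rdist A C \<le> rdist A B + rdist B C + 2 * rdist A B * rdist B C"
proof -
  have n1: "rdist A B \<ge> 0" and n2: "rdist B C \<ge> 0" by (rule rdist_nonneg)+
  show ?thesis
  proof (cases "rdist A B = \<infinity> \<or> rdist B C = \<infinity>")
    case True
    have inf: "rdist A B + rdist B C + 2 * rdist A B * rdist B C = \<infinity>"
    proof (cases "rdist A B = \<infinity>")
      case True
      then show ?thesis using n2 by (cases "rdist B C") auto
    next
      case False
      then have "rdist B C = \<infinity>" using \<open>rdist A B = \<infinity> \<or> rdist B C = \<infinity>\<close> by simp
      then show ?thesis using n1 by (cases "rdist A B") auto
    qed
    show ?thesis unfolding inf by simp
  next
    case False
    then obtain a b where ab: "rdist A B = ereal a" "rdist B C = ereal b" "a \<ge> 0" "b \<ge> 0"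
      using n1 n2 by (cases "rdist A B"; cases "rdist B C") auto
    show ?thesis
    proof (rule ereal_le_epsilon2)
      fix e :: real assume e: "e > 0"
      define d where "d = min 1 (e / (4 + 2 * a + 2 * b))"
      have K: "4 + 2 * a + 2 * b > 0" using ab by simp
      have d1: "d > 0" using e K unfolding d_def by simp
      have d2: "d \<le> 1" unfolding d_def by simp
      have "d \<le> e / (4 + 2 * a + 2 * b)" unfolding d_def by simp
      then have d3: "d * (4 + 2 * a + 2 * b) \<le> e" using K by (simp add: pos_le_divide_eq)
      note d = d1 d2 d3
      obtain l1 where l1: "0 \<le> l1" "l1 < a + d" "B \<subseteq> scaled_diff (1 + l1) A l1 A"
        using get_l[OF assms(1,3), of "a + d"] ab d by auto
      have BC: "B \<subseteq> C" by fact
      obtain l2 where l2: "0 \<le> l2" "l2 < b + d" "C \<subseteq> scaled_diff (1 + l2) B l2 B"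
        using get_l[OF assms(2) BC, of "b + d"] ab d by auto
      have "rdist A C \<le> ereal (l1 + l2 + 2 * l1 * l2)"
        using L1[of A C] sd_comp[OF assms(1) l1(1) l2(1) l1(3) l2(3)] l1 l2 assms(3,4) by auto
      also have "l1 + l2 + 2 * l1 * l2 \<le> a + b + 2 * a * b + e"
      proof -
        have "l1 * l2 \<le> (a + d) * (b + d)" using l1 l2 by (intro mult_mono) auto
        moreover have "(a + d) * (b + d) = a * b + a * d + b * d + d * d" by (simp add: algebra_simps)
        moreover have "d * d \<le> d" using d by (simp add: mult_le_cancel_left1)
        ultimately have h: "l1 * l2 \<le> a * b + a * d + b * d + d" by linarith
        have h2: "4 * d + 2 * (a * d) + 2 * (b * d) \<le> e" using d(3) by (simp add: algebra_simps)
        show ?thesis using h h2 l1(2) l2(2) by linarith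
      qed
      then have "ereal (l1 + l2 + 2 * l1 * l2) \<le> ereal (a + b + 2 * a * b) + ereal e" by simp
      finally show "rdist A C \<le> rdist A B + rdist B C + 2 * rdist A B * rdist B C + ereal e"
        using ab by simp
    qed
  qed
qed

lemma part_iv:
  fixes As Bs :: "nat \<Rightarrow> 'a::euclidean_space set"
  assumes "t \<ge> 1" "\<forall>i\<in>{1..t}. convex (As i) \<and> convex (Bs i) \<and> As i \<subseteq> Bs i"
  shows "rdist (convex hull (\<Union>i\<in>{1..t}. As i)) (convex hull (\<Union>i\<in>{1..t}. Bs i))
             \<le> Max ((\<lambda>i. rdist (As i) (Bs i)) ` {1..t})"
proof -
  define r where "r = Max ((\<lambda>i. rdist (As i) (Bs i)) ` {1..t})"
  define H where "H = convex hull (\<Union>i\<in>{1..t}. As i)"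
  define G where "G = convex hull (\<Union>i\<in>{1..t}. Bs i)"
  have rge: "rdist (As i) (Bs i) \<le> r" if "i \<in> {1..t}" for i
    unfolding r_def using that by (intro Max_ge) auto
  have r0: "r \<ge> 0" using rge[of 1] assms(1) rdist_nonneg[of "As 1" "Bs 1"] by auto
  have HG: "H \<subseteq> G" unfolding H_def G_def using assms(2) by (intro hull_mono) blast
  show ?thesis unfolding r_def[symmetric] H_def[symmetric] G_def[symmetric]
  proof (cases "r = \<infinity>")
    case True then show "rdist H G \<le> r" by simp
  next
    case False
    then obtain \<rho> where \<rho>: "r = ereal \<rho>" "\<rho> \<ge> 0" using r0 by (cases r) auto
    show "rdist H G \<le> r"
    proof (rule ereal_le_epsilon2)
      fix e :: real assume e: "e > 0"
      define l where "l = \<rho> + e"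
      have "G \<subseteq> scaled_diff (1 + l) H l H"
        unfolding G_def
      proof (rule hull_minimal)
        show "convex (scaled_diff (1 + l) H l H)" unfolding H_def
          by (intro sd_convex convex_convex_hull)
        show "(\<Union>i\<in>{1..t}. Bs i) \<subseteq> scaled_diff (1 + l) H l H"
        proof (intro UN_least)
          fix i assume i: "i \<in> {1..t}"
          then have ci: "convex (As i)" "As i \<subseteq> Bs i" using assms(2) by auto
          have "ereal \<rho> < ereal l" using e unfolding l_def by simp
          then have "rdist (As i) (Bs i) < ereal l" using rge[OF i] \<rho> by (metis order_le_less_trans)
          then obtain li where li: "0 \<le> li" "li < l" "Bs i \<subseteq> scaled_diff (1 + li) (As i) li (As i)"
            using get_l[OF ci] by blast
          have "Bs i \<subseteq> scaled_diff (1 + l) (As i) l (As i)"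
            using sd_up[OF ci(1) li(1) _ li(3)] li(2) by simp
          also have "\<dots> \<subseteq> scaled_diff (1 + l) H l H"
            using i unfolding H_def by (intro sd_mono subset_trans[OF _ hull_subset]) auto
          finally show "Bs i \<subseteq> scaled_diff (1 + l) H l H" .
        qed
      qed
      then have "rdist H G \<le> ereal l" using L1[OF HG] \<rho> e unfolding l_def by auto
      then show "rdist H G \<le> r + ereal e" using \<rho> unfolding l_def by simp
    qed
  qed
qed

theorem mainTheorem4:
  fixes A B C :: "'a::euclidean_space set"
  assumes "convex A" "convex B" "convex C" "A \<subseteq> B" "B \<subseteq> C"
  shows "(rdist A B = Inf (ereal ` {l::real. l \<ge> 0 \<and> B \<subseteq> scaled_diff (1 + l) A l A})) \<and>
         (\<forall>\<pi>::'a \<Rightarrow> 'b::euclidean_space. affine_map \<pi> \<longrightarrow>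
           rdist (\<pi> ` A) (\<pi> ` B) \<le> rdist A B \<and>
           (DIM('b) = DIM('a) \<and> bij \<pi> \<longrightarrow> rdist (\<pi> ` A) (\<pi> ` B) = rdist A B)) \<and>
         (rdist A C \<le> rdist A B + rdist B C + 2 * rdist A B * rdist B C) \<and>
         (\<forall>(t::nat) (As::nat \<Rightarrow> 'a set) (Bs::nat \<Rightarrow> 'a set). t \<ge> 1 \<longrightarrow>
           (\<forall>i\<in>{1..t}. convex (As i) \<and> convex (Bs i) \<and> As i \<subseteq> Bs i) \<longrightarrow>
           rdist (convex hull (\<Union>i\<in>{1..t}. As i)) (convex hull (\<Union>i\<in>{1..t}. Bs i))
             \<le> Max ((\<lambda>i. rdist (As i) (Bs i)) ` {1..t}))"
  using part_i[OF assms(1,4)] part_ii_le part_ii_eq part_iii[OF assms(1,2,4,5)] part_iv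
  by blast

end
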